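(* Let $\mathcal{A}$ be a separating union-closed family with base set $[n]$ and height $h=4$, and let $\mathcal{B}=\{B_1,B_2,B_3,B_4\}$ be a choice of $\mathcal{B}(\mathcal{A})$ with $|\mathcal{B}|=4$. Then: (i) if $n$ is even, then $\sum_{i=1}^4 |B_i| = 2n-4$ and $|B_i|=\frac{n-2}{2}$ for all $i \in \{1,2,3,4\}$; (ii) if $n$ is odd, then $2n-4 \leq \sum_{i=1}^4 |B_i| \leq 2n-2$ and $|B_i| \geq \frac{n-5}{2}$ for all $i \in \{1,2,3,4\}$; moreover, if there exists $i \in \{1,2,3,4\}$ with $|B_i|=\frac{n-5}{2}$, then $|B_j|=\frac{n-1}{2}$ for all $j \in \{1,2,3,4\} \setminus \{i\}$.
   Context: A family of sets $\mathcal{A}$ is union-closed if it is a finite family of distinct finite sets with at least one nonempty member set, and $X,Y\in\mathcal{A}$ implies $X\cup Y\in\mathcal{A}$ (the empty set may be a member). For a family $\mathcal{F}$, $b(\mathcal{F})=\bigcup_{F\in\mathcal{F}}F$; the base set $b(\mathcal{A})$ is denoted $[n]=\{1,\dots,n\}$. $\mathcal{A}$ is separating if for any two distinct $x,y\in[n]$ there is $A\in\mathcal{A}$ containing exactly one of $x,y$. A chain in $\mathcal{A}$ is a subfamily any two distinct members of which are comparable under proper inclusion; the height $h$ of $\mathcal{A}$ is the maximum size of a chain in $\mathcal{A}$. For real $x\ge 0$, $\mathcal{A}_{<x}=\{A\in\mathcal{A} : |A|<x\}$. For $\mathcal{S}\subseteq\mathcal{A}$ and $S\in\mathcal{S}$,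 $\mathrm{irr}_{\mathcal{S}}(S)=\{s\in S : s\notin b(\mathcal{S}\setminus\{S\})\}$, and $\mathcal{S}$ is irredundant if $\mathrm{irr}_{\mathcal{S}}(S)\neq\emptyset$ for every $S\in\mathcal{S}$. With $B=b(\mathcal{A}_{<n/2})$, $\mathcal{B}(\mathcal{A})$ denotes any irredundant subfamily of $\mathcal{A}_{<n/2}$ of minimum size such that $b(\mathcal{B}(\mathcal{A}))=B$. *)

theory Defs
  imports Main "HOL.Real"
begin

definition union_closed :: "'a set set \<Rightarrow> bool" where
  "union_closed A \<longleftrightarrow> finite A \<and> (\<forall>X\<in>A. finite X) \<and> (\<exists>X\<in>A. X \<noteq> {})
     \<and> (\<forall>X\<in>A. \<forall>Y\<in>A. X \<union> Y \<in> A)"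

definition separating :: "'a set set \<Rightarrow> bool" where
  "separating A \<longleftrightarrow> (\<forall>x\<in>\<Union>A. \<forall>y\<in>\<Union>A. x \<noteq> y \<longrightarrow> (\<exists>S\<in>A. (x \<in> S) \<noteq> (y \<in> S)))"

definition is_chain :: "'a set set \<Rightarrow> bool" where
  "is_chain C \<longleftrightarrow> (\<forall>X\<in>C. \<forall>Y\<in>C. X \<noteq> Y \<longrightarrow> X \<subset> Y \<or> Y \<subset> X)"

definition height :: "'a set set \<Rightarrow> nat" where
  "height A = Max {card C | C. C \<subseteq> A \<and> is_chain C}"

definition smaller_than :: "'a set set \<Rightarrow> real \<Rightarrow> 'a set set" where
  "smaller_than A x = {S\<in>A. real (card S) < x}"

definition irr :: "'a set set \<Rightarrow> 'a set \<Rightarrow> 'a set" where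
  "irr S T = {s\<in>T. s \<notin> \<Union>(S - {T})}"

definition irredundant :: "'a set set \<Rightarrow> bool" where
  "irredundant S \<longleftrightarrow> (\<forall>T\<in>S. irr S T \<noteq> {})"

definition is_B :: "'a set set \<Rightarrow> nat \<Rightarrow> 'a set set \<Rightarrow> bool" where
  "is_B A n Bf \<longleftrightarrow>
     Bf \<subseteq> smaller_than A (real n / 2) \<and> irredundant Bf \<and>
     \<Union>Bf = \<Union>(smaller_than A (real n / 2)) \<and>
     (\<forall>C. C \<subseteq> smaller_than A (real n / 2) \<and> irredundant C \<and>
          \<Union>C = \<Union>(smaller_than A (real n / 2)) \<longrightarrow> card Bf \<le> card C)"

end

theory Submission
  imports Defs
begin
lemma count_lemma:
  fixes Bf :: "'a set set"
  assumes fin: "finite Bf" and U: "\<Union>Bf = N" and fN: "finite N"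
    and irr1: "\<forall>B\<in>Bf. card (irr Bf B) \<le> 1"
  shows "2 * card N \<le> (\<Sum>B\<in>Bf. card B) + card Bf"
proof -
  define I where "I = (\<Union>B\<in>Bf. irr Bf B)"
  have sub: "\<And>B. B \<in> Bf \<Longrightarrow> B \<subseteq> N" using U by blast
  have "(\<Sum>B\<in>Bf. card B) = (\<Sum>B\<in>Bf. \<Sum>x\<in>N. if x \<in> B then 1 else 0)"
  proof (rule sum.cong)
    fix B assume "B \<in> Bf"
    hence "B \<subseteq> N" by (rule sub)
    hence "N \<inter> B = B" by blast
    thus "card B = (\<Sum>x\<in>N. if x \<in> B then 1 else 0)"
      using fN by (simp add: sum.If_cases)
  qed simp
  also have "\<dots> = (\<Sum>x\<in>N. \<Sum>B\<in>Bf. if x \<in> B then 1 else 0)" by (rule sum.swap)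
  also have "\<dots> = (\<Sum>x\<in>N. card {B\<in>Bf. x \<in> B})"
    using fin by (simp add: sum.If_cases Int_def conj_commute)
  finally have S: "(\<Sum>B\<in>Bf. card B) = (\<Sum>x\<in>N. card {B\<in>Bf. x \<in> B})" .
  have cI: "card I \<le> card Bf"
  proof -
    have "card I \<le> (\<Sum>B\<in>Bf. card (irr Bf B))" unfolding I_def using fin by (rule card_UN_le)
    also have "\<dots> \<le> (\<Sum>B\<in>Bf. 1)" using irr1 by (intro sum_mono) auto
    finally show ?thesis by simp
  qed
  have IN: "I \<subseteq> N" unfolding I_def irr_def using U by blast
  have pt: "2 \<le> card {B\<in>Bf. x \<in> B} + (if x \<in> I then 1 else 0)" if "x \<in> N" for x
  proof (cases "x \<in> I")
    case True
    then obtain B where "B \<in> Bf" "x \<in> B" unfolding I_def irr_def by blast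
    hence "card {B\<in>Bf. x \<in> B} \<ge> 1" using fin
      by (metis (no_types, lifting) One_nat_def Suc_leI card_gt_0_iff empty_iff finite_subset mem_Collect_eq subsetI)
    thus ?thesis using True by simp
  next
    case False
    from that U obtain B where B: "B \<in> Bf" "x \<in> B" by blast
    with False have "x \<notin> irr Bf B" unfolding I_def by blast
    with B obtain B' where B': "B' \<in> Bf" "B' \<noteq> B" "x \<in> B'" unfolding irr_def by blast
    have "{B, B'} \<subseteq> {B\<in>Bf. x \<in> B}" using B B' by blast
    moreover have "finite {B\<in>Bf. x \<in> B}" using fin by simp
    ultimately have "card {B, B'} \<le> card {B\<in>Bf. x \<in> B}" by (rule card_mono[rotated])
    thus ?thesis using B' by simp
  qed
  have "2 * card N = (\<Sum>x\<in>N. 2)" by simp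
  also have "\<dots> \<le> (\<Sum>x\<in>N. card {B\<in>Bf. x \<in> B} + (if x \<in> I then 1 else 0))"
    using pt by (intro sum_mono) auto
  also have "\<dots> = (\<Sum>x\<in>N. card {B\<in>Bf. x \<in> B}) + card I"
    using fN IN by (simp add: sum.distrib sum.If_cases Int_absorb1 inf.absorb2)
  finally show ?thesis using S cI by linarith
qed


lemma chain5:
  assumes fA: "finite A" and inA: "X1 \<in> A" "X2 \<in> A" "X3 \<in> A" "X4 \<in> A" "X5 \<in> A"
    and c: "X1 \<subset> X2" "X2 \<subset> X3" "X3 \<subset> X4" "X4 \<subset> X5"
  shows "5 \<le> height A"
proof -
  let ?C = "{X1, X2, X3, X4, X5}"
  have ch: "is_chain ?C" unfolding is_chain_def using c by auto
  have d: "X1 \<noteq> X2" "X1 \<noteq> X3" "X1 \<noteq> X4" "X1 \<noteq> X5" "X2 \<noteq> X3" "X2 \<noteq> X4"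
    "X2 \<noteq> X5" "X3 \<noteq> X4" "X3 \<noteq> X5" "X4 \<noteq> X5" using c by blast+
  have cC: "card ?C = 5" using d by simp
  have sub: "?C \<subseteq> A" using inA by auto
  have fin: "finite {card C | C. C \<subseteq> A \<and> is_chain C}"
  proof -
    have "{card C | C. C \<subseteq> A \<and> is_chain C} \<subseteq> card ` Pow A" by blast
    thus ?thesis using fA by (meson finite_Pow_iff finite_imageI finite_subset)
  qed
  have "card ?C \<in> {card C | C. C \<subseteq> A \<and> is_chain C}" using ch sub by blast
  hence "card ?C \<le> height A" unfolding height_def using fin by (rule Max_ge[rotated])
  thus ?thesis using cC by simp
qed

lemma irrD:
  assumes "z \<in> irr Bf B" "B' \<in> Bf" "B' \<noteq> B"
  shows "z \<in> B" "z \<notin> B'"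
  using assms unfolding irr_def by auto

lemma irr_sep:
  assumes dist: "B1 \<noteq> B2" "B1 \<noteq> B3" "B1 \<noteq> B4" "B2 \<noteq> B3" "B2 \<noteq> B4" "B3 \<noteq> B4"
    and Bf: "Bf = {B1, B2, B3, B4}" and ir: "irredundant Bf"
    and uc: "union_closed A" and h: "height A = 4"
    and inA: "B1 \<in> A" "B2 \<in> A" "B3 \<in> A" "B4 \<in> A"
    and xy: "x \<in> irr Bf B1" "y \<in> irr Bf B1" and S: "S \<in> A" "x \<in> S" "y \<notin> S"
  shows False
proof -
  have fA: "finite A" and cl: "\<And>X Y. X \<in> A \<Longrightarrow> Y \<in> A \<Longrightarrow> X \<union> Y \<in> A"
    using uc unfolding union_closed_def by auto
  obtain z3 where z3: "z3 \<in> irr Bf B3" using ir Bf unfolding irredundant_def by blast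
  obtain z4 where z4: "z4 \<in> irr Bf B4" using ir Bf unfolding irredundant_def by blast
  have "5 \<le> height A"
  proof (rule chain5[of A B2 "B2 \<union> B3" "B2 \<union> B3 \<union> B4" "B2 \<union> B3 \<union> B4 \<union> S" "B2 \<union> B3 \<union> B4 \<union> S \<union> B1"])
    show "finite A" by fact
    show "B2 \<in> A" by fact
    show "B2 \<union> B3 \<in> A" by (intro cl inA)
    show "B2 \<union> B3 \<union> B4 \<in> A" by (intro cl inA)
    show "B2 \<union> B3 \<union> B4 \<union> S \<in> A" by (intro cl inA S(1))
    show "B2 \<union> B3 \<union> B4 \<union> S \<union> B1 \<in> A" by (intro cl inA S(1))
    have m: "B1 \<in> Bf" "B2 \<in> Bf" "B3 \<in> Bf" "B4 \<in> Bf" unfolding Bf by auto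
    have z3': "z3 \<in> B3" "z3 \<notin> B2" using irrD[OF z3] m dist by auto
    have z4': "z4 \<in> B4" "z4 \<notin> B2" "z4 \<notin> B3" using irrD[OF z4] m dist by auto
    have x': "x \<in> B1" "x \<notin> B2" "x \<notin> B3" "x \<notin> B4" using irrD[OF xy(1)] m dist by auto
    have y': "y \<in> B1" "y \<notin> B2" "y \<notin> B3" "y \<notin> B4" using irrD[OF xy(2)] m dist by auto
    show "B2 \<subset> B2 \<union> B3" using z3' by blast
    show "B2 \<union> B3 \<subset> B2 \<union> B3 \<union> B4" using z4' by blast
    show "B2 \<union> B3 \<union> B4 \<subset> B2 \<union> B3 \<union> B4 \<union> S" using x' S by blast
    show "B2 \<union> B3 \<union> B4 \<union> S \<subset> B2 \<union> B3 \<union> B4 \<union> S \<union> B1" using y' S by blast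
  qed
  thus False using h by simp
qed

lemma irr_le1:
  assumes dist: "B1 \<noteq> B2" "B1 \<noteq> B3" "B1 \<noteq> B4" "B2 \<noteq> B3" "B2 \<noteq> B4" "B3 \<noteq> B4"
    and Bf: "Bf = {B1, B2, B3, B4}" and ir: "irredundant Bf"
    and uc: "union_closed A" and h: "height A = 4" and sep: "separating A"
    and inA: "B1 \<in> A" "B2 \<in> A" "B3 \<in> A" "B4 \<in> A"
  shows "card (irr Bf B1) \<le> 1"
proof -
  have fin: "finite (irr Bf B1)" using uc inA unfolding union_closed_def irr_def by auto
  have "\<forall>x\<in>irr Bf B1. \<forall>y\<in>irr Bf B1. x = y"
  proof (intro ballI, rule ccontr)
    fix x y assume xy: "x \<in> irr Bf B1" "y \<in> irr Bf B1" "x \<noteq> y"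
    have "x \<in> \<Union>A" "y \<in> \<Union>A" using xy inA unfolding irr_def by auto
    then obtain S where S: "S \<in> A" "(x \<in> S) \<noteq> (y \<in> S)" using sep xy unfolding separating_def by blast
    show False
    proof (cases "x \<in> S")
      case True
      thus False using irr_sep[OF dist Bf ir uc h inA xy(1,2) S(1)] S by blast
    next
      case False
      thus False using irr_sep[OF dist Bf ir uc h inA xy(2,1) S(1)] S by blast
    qed
  qed
  thus ?thesis using fin by (simp add: card_le_Suc0_iff_eq)
qed

lemma four_ball:
  assumes "Bf = {B1, B2, B3, B4}" "P B1" "P B2" "P B3" "P B4"
  shows "\<forall>B\<in>Bf. P B"
  using assms by auto

lemma card4:
  assumes "card Bf = 4"
  obtains B1 B2 B3 B4 where "B1 \<noteq> B2" "B1 \<noteq> B3" "B1 \<noteq> B4" "B2 \<noteq> B3" "B2 \<noteq> B4" "B3 \<noteq> B4"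
    "Bf = {B1, B2, B3, B4}"
proof -
  have "card Bf = Suc 3" using assms by simp
  then obtain b R where R: "Bf = insert b R" "b \<notin> R" "card R = 3"
    using card_eq_SucD by blast
  then obtain x y z where xyz: "R = {x, y, z}" "x \<noteq> y" "y \<noteq> z" "x \<noteq> z"
    unfolding card_3_iff by blast
  have "b \<noteq> x" "b \<noteq> y" "b \<noteq> z" using R(2) xyz(1) by auto
  moreover have "Bf = {b, x, y, z}" using R(1) xyz(1) by simp
  ultimately show ?thesis using that xyz(2-4) by simp
qed
theorem propositionL:
  fixes A :: "nat set set" and n :: nat and Bf :: "nat set set"
  assumes "union_closed A"
    and "\<Union>A = {1..n}"
    and "separating A"
    and "height A = 4"
    and "is_B A n Bf"
    and "card Bf = 4"
  shows "(even n \<longrightarrow>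
            real (\<Sum>B\<in>Bf. card B) = 2 * real n - 4 \<and>
            (\<forall>B\<in>Bf. real (card B) = (real n - 2) / 2))
       \<and> (odd n \<longrightarrow>
            2 * real n - 4 \<le> real (\<Sum>B\<in>Bf. card B) \<and>
            real (\<Sum>B\<in>Bf. card B) \<le> 2 * real n - 2 \<and>
            (\<forall>B\<in>Bf. real (card B) \<ge> (real n - 5) / 2) \<and>
            (\<forall>B\<in>Bf. real (card B) = (real n - 5) / 2 \<longrightarrow>
                (\<forall>B'\<in>Bf - {B}. real (card B') = (real n - 1) / 2)))"
proof -
  have fA: "finite A" and cl: "\<And>X Y. X \<in> A \<Longrightarrow> Y \<in> A \<Longrightarrow> X \<union> Y \<in> A"
    using assms(1) unfolding union_closed_def by auto
  have sub: "Bf \<subseteq> smaller_than A (real n / 2)" and ir: "irredundant Bf"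
    using assms(5) unfolding is_B_def by auto
  obtain B1 B2 B3 B4 where dist: "B1 \<noteq> B2" "B1 \<noteq> B3" "B1 \<noteq> B4" "B2 \<noteq> B3" "B2 \<noteq> B4" "B3 \<noteq> B4"
    and Bf: "Bf = {B1, B2, B3, B4}"
    using assms(6) by (rule card4)
  have BA: "Bf \<subseteq> A" using sub unfolding smaller_than_def by blast
  have inA: "B1 \<in> A" "B2 \<in> A" "B3 \<in> A" "B4 \<in> A" using BA unfolding Bf by simp_all
  have small: "\<And>B. B \<in> Bf \<Longrightarrow> 2 * card B < n"
  proof -
    fix B assume "B \<in> Bf"
    hence "real (card B) < real n / 2" using sub unfolding smaller_than_def by auto
    thus "2 * card B < n" by linarith
  qed
  have s1: "2 * card B1 < n" "2 * card B2 < n" "2 * card B3 < n" "2 * card B4 < n"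
    using small Bf by auto
  have ir1: "card (irr Bf B1) \<le> 1"
    by (rule irr_le1[OF dist Bf ir assms(1,4,3) inA])
  have ir2: "card (irr Bf B2) \<le> 1"
  proof -
    have P: "Bf = {B2, B1, B3, B4}" unfolding Bf by auto
    have D: "B2 \<noteq> B1" "B2 \<noteq> B3" "B2 \<noteq> B4" "B1 \<noteq> B3" "B1 \<noteq> B4" "B3 \<noteq> B4" using dist by auto
    show ?thesis by (rule irr_le1[OF D P ir assms(1,4,3)]) (use inA in simp_all)
  qed
  have ir3: "card (irr Bf B3) \<le> 1"
  proof -
    have P: "Bf = {B3, B1, B2, B4}" unfolding Bf by auto
    have D: "B3 \<noteq> B1" "B3 \<noteq> B2" "B3 \<noteq> B4" "B1 \<noteq> B2" "B1 \<noteq> B4" "B2 \<noteq> B4" using dist by auto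
    show ?thesis by (rule irr_le1[OF D P ir assms(1,4,3)]) (use inA in simp_all)
  qed
  have ir4: "card (irr Bf B4) \<le> 1"
  proof -
    have P: "Bf = {B4, B1, B2, B3}" unfolding Bf by auto
    have D: "B4 \<noteq> B1" "B4 \<noteq> B2" "B4 \<noteq> B3" "B1 \<noteq> B2" "B1 \<noteq> B3" "B2 \<noteq> B3" using dist by auto
    show ?thesis by (rule irr_le1[OF D P ir assms(1,4,3)]) (use inA in simp_all)
  qed
  have cov: "\<Union>Bf = {1..n}"
  proof (rule ccontr)
    assume ne: "\<Union>Bf \<noteq> {1..n}"
    have "\<Union>Bf \<subseteq> {1..n}" using assms(2) Bf inA by blast
    with ne obtain x where x: "x \<in> {1..n}" "x \<notin> \<Union>Bf" by blast
    then obtain S where S: "S \<in> A" "x \<in> S" using assms(2) by blast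
    obtain z2 where z2: "z2 \<in> irr Bf B2" using ir Bf unfolding irredundant_def by blast
    obtain z3 where z3: "z3 \<in> irr Bf B3" using ir Bf unfolding irredundant_def by blast
    obtain z4 where z4: "z4 \<in> irr Bf B4" using ir Bf unfolding irredundant_def by blast
    have "5 \<le> height A"
    proof (rule chain5[of A B1 "B1 \<union> B2" "B1 \<union> B2 \<union> B3" "B1 \<union> B2 \<union> B3 \<union> B4" "B1 \<union> B2 \<union> B3 \<union> B4 \<union> S"])
      show "finite A" by fact
      show "B1 \<in> A" by fact
      show "B1 \<union> B2 \<in> A" by (intro cl inA)
      show "B1 \<union> B2 \<union> B3 \<in> A" by (intro cl inA)
      show "B1 \<union> B2 \<union> B3 \<union> B4 \<in> A" by (intro cl inA)
      show "B1 \<union> B2 \<union> B3 \<union> B4 \<union> S \<in> A" by (intro cl inA S(1))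
      have m: "B1 \<in> Bf" "B2 \<in> Bf" "B3 \<in> Bf" "B4 \<in> Bf" unfolding Bf by auto
      have z2': "z2 \<in> B2" "z2 \<notin> B1" using irrD[OF z2] m dist by auto
      have z3': "z3 \<in> B3" "z3 \<notin> B1" "z3 \<notin> B2" using irrD[OF z3] m dist by auto
      have z4': "z4 \<in> B4" "z4 \<notin> B1" "z4 \<notin> B2" "z4 \<notin> B3" using irrD[OF z4] m dist by auto
      show "B1 \<subset> B1 \<union> B2" using z2' by blast
      show "B1 \<union> B2 \<subset> B1 \<union> B2 \<union> B3" using z3' by blast
      show "B1 \<union> B2 \<union> B3 \<subset> B1 \<union> B2 \<union> B3 \<union> B4" using z4' by blast
      show "B1 \<union> B2 \<union> B3 \<union> B4 \<subset> B1 \<union> B2 \<union> B3 \<union> B4 \<union> S" using x S unfolding Bf by auto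
    qed
    thus False using assms(4) by simp
  qed
  have "2 * card {1..n} \<le> (\<Sum>B\<in>Bf. card B) + card Bf"
    by (rule count_lemma) (use cov ir1 ir2 ir3 ir4 Bf in auto)
  hence key: "2 * n \<le> (\<Sum>B\<in>Bf. card B) + 4" using assms(6) by simp
  have sumeq: "(\<Sum>B\<in>Bf. card B) = card B1 + card B2 + card B3 + card B4"
    using dist unfolding Bf by simp
  have m1: "Bf - {B1} = {B2, B3, B4}" using dist unfolding Bf by auto
  have m2: "Bf - {B2} = {B1, B3, B4}" using dist unfolding Bf by auto
  have m3: "Bf - {B3} = {B1, B2, B4}" using dist unfolding Bf by auto
  have m4: "Bf - {B4} = {B1, B2, B3}" using dist unfolding Bf by auto
  have sumr: "real (\<Sum>B\<in>Bf. card B) = real (card B1) + real (card B2) + real (card B3) + real (card B4)"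
    using sumeq by simp
  show ?thesis
  proof (cases "even n")
    case True
    then obtain k where k: "n = 2 * k" by blast
    have "card B1 + 1 \<le> k" "card B2 + 1 \<le> k" "card B3 + 1 \<le> k" "card B4 + 1 \<le> k"
      using s1 k by auto
    hence e: "card B1 + 1 = k" "card B2 + 1 = k" "card B3 + 1 = k" "card B4 + 1 = k"
      using key sumeq k by linarith+
    have rn: "(real n - 2) / 2 = real k - 1" using k by simp
    have er: "real (card B1) = real k - 1" "real (card B2) = real k - 1"
      "real (card B3) = real k - 1" "real (card B4) = real k - 1" using e by linarith+
    have E1: "real (\<Sum>B\<in>Bf. card B) = 2 * real n - 4" using sumr er k by simp
    have E2: "\<forall>B\<in>Bf. real (card B) = (real n - 2) / 2"
      unfolding rn by (rule four_ball[OF Bf]) (use er in simp_all)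
    show ?thesis using True E1 E2 by blast
  next
    case False
    then obtain k where k: "n = 2 * k + 1" using oddE by blast
    have le: "card B1 \<le> k" "card B2 \<le> k" "card B3 \<le> k" "card B4 \<le> k"
      using s1 k by auto
    have ks: "4 * k \<le> card B1 + card B2 + card B3 + card B4 + 2" using key sumeq k by linarith
    have r: "real (card B1) \<le> real k" "real (card B2) \<le> real k"
      "real (card B3) \<le> real k" "real (card B4) \<le> real k"
      "4 * real k \<le> real (card B1) + real (card B2) + real (card B3) + real (card B4) + 2"
      using le ks by linarith+
    have rn5: "(real n - 5) / 2 = real k - 2" and rn1: "(real n - 1) / 2 = real k"
      and rn: "real n = 2 * real k + 1" using k by simp_all
    have O1: "2 * real n - 4 \<le> real (\<Sum>B\<in>Bf. card B)" using sumr r rn by linarith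
    have O2: "real (\<Sum>B\<in>Bf. card B) \<le> 2 * real n - 2" using sumr r rn by linarith
    have O3: "\<forall>B\<in>Bf. real (card B) \<ge> (real n - 5) / 2"
      unfolding rn5 by (rule four_ball[OF Bf]) (use r in linarith)+
    have O4: "\<forall>B\<in>Bf. real (card B) = (real n - 5) / 2 \<longrightarrow>
                (\<forall>B'\<in>Bf - {B}. real (card B') = (real n - 1) / 2)"
      unfolding rn5 rn1
    proof (rule four_ball[OF Bf])
      show "real (card B1) = real k - 2 \<longrightarrow> (\<forall>B'\<in>Bf - {B1}. real (card B') = real k)"
        unfolding m1 using r by auto
      show "real (card B2) = real k - 2 \<longrightarrow> (\<forall>B'\<in>Bf - {B2}. real (card B') = real k)"
        unfolding m2 using r by auto
      show "real (card B3) = real k - 2 \<longrightarrow> (\<forall>B'\<in>Bf - {B3}. real (card B') = real k)"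
        unfolding m3 using r by auto
      show "real (card B4) = real k - 2 \<longrightarrow> (\<forall>B'\<in>Bf - {B4}. real (card B') = real k)"
        unfolding m4 using r by auto
    qed
    show ?thesis using False O1 O2 O3 O4 by blast
  qed
qed

end
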